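(* Consider the one-hop wireless network model described in the context, where the channel powers $\gamma_{i,j}$ are i.i.d. with the Gamma distribution (Nakagami-$m$ fading) with p.d.f. $f(x)=x^{m-1}\frac{e^{-mx/\Omega}}{\Gamma(m)(\Omega/m)^m}$ and c.d.f. $F(x)=\gamma(m,mx/\Omega)/\Gamma(m)$ for $x\ge 0$, where $m,\Omega>0$ are parameters, $\Gamma(\cdot)$ is the Gamma function and $\gamma(\cdot,\cdot)$ the lower incomplete Gamma function. Then, with high probability, the achievable throughput (obtained by activating the source-destination pairs with the largest direct-link powers and silencing the rest) satisfies $T=\Omega(\log n)$.
   Context: Network model: $n$ sources $S_1,\dots,S_n$ and $n$ destinations $D_1,\dots,D_n$; $S_i$ wishes to communicate with $D_i$ in one hop. The channel power from $S_i$ to $D_j$ is $\gamma_{i,j}\ge0$; all $\gamma_{i,j}$ are i.i.d. with mean $\mu$. A subset $\mathbb{S}$ of sources is active, each with power $1$; $SINR_i=\frac{\gamma_{i,i}}{N_0+\sum_{S_k\in\mathbb{S},k\ne i}\gamma_{k,i}}$ for $S_i\in\mathbb{S}$ (and $0$ otherwise), with noise variance $N_0\ge0$; $D_i$ succeeds if $SINR_i>\beta$ for a fixed constant $\beta>0$. The throughput $T$ is the number of successful destinations. "With high probability" means with probability tending to $1$ as $n\to\infty$. *)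

theory Defs
  imports "HOL-Probability.Probability"
begin

definition gamma_pdf :: "real \<Rightarrow> real \<Rightarrow> real \<Rightarrow> real" where
  "gamma_pdf m \<Omega> x =
     (if 0 \<le> x then x powr (m - 1) * exp (- m * x / \<Omega>) / (Gamma m * (\<Omega> / m) powr m) else 0)"

definition nakagami_power :: "real \<Rightarrow> real \<Rightarrow> real measure" where
  "nakagami_power m \<Omega> = density lborel (\<lambda>x. ennreal (gamma_pdf m \<Omega> x))"

definition channel_space :: "real \<Rightarrow> real \<Rightarrow> nat \<Rightarrow> (nat \<times> nat \<Rightarrow> real) measure" where
  "channel_space m \<Omega> n = PiM ({..<n} \<times> {..<n}) (\<lambda>_. nakagami_power m \<Omega>)"

definition SINR :: "(nat \<times> nat \<Rightarrow> real) \<Rightarrow> real \<Rightarrow> nat set \<Rightarrow> nat \<Rightarrow> real" where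
  "SINR g N0 S i = (if i \<in> S then g (i, i) / (N0 + (\<Sum>k\<in>S - {i}. g (k, i))) else 0)"

definition throughput :: "nat \<Rightarrow> (nat \<times> nat \<Rightarrow> real) \<Rightarrow> real \<Rightarrow> real \<Rightarrow> nat set \<Rightarrow> nat" where
  "throughput n g N0 \<beta> S = card {i \<in> {..<n}. SINR g N0 S i > \<beta>}"

definition top_direct_set :: "nat \<Rightarrow> (nat \<times> nat \<Rightarrow> real) \<Rightarrow> nat \<Rightarrow> nat set \<Rightarrow> bool" where
  "top_direct_set n g k S \<longleftrightarrow> S \<subseteq> {..<n} \<and> card S = k \<and>
     (\<forall>i\<in>S. \<forall>j\<in>{..<n} - S. g (j, j) \<le> g (i, i))"

end

theory Submission
  imports Defs "HOL-Real_Asymp.Real_Asymp"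
begin


lemma gamma_pdf_meas[measurable]: "gamma_pdf m \<Omega> \<in> borel_measurable borel"
  unfolding gamma_pdf_def[abs_def] by measurable

lemma gamma_int:
  fixes m b :: real assumes m: "m > 0" and b: "b > 0"
  shows "(\<integral>\<^sup>+x. ennreal (indicator {0..} x * x powr (m-1) * exp(-b*x)) \<partial>lborel) = ennreal (Gamma m / b powr m)"
proof -
  have "(\<integral>\<^sup>+x. ennreal (indicator {0..} x * x powr (m-1) * exp(-b*x)) \<partial>lborel)
    = ennreal \<bar>1/b\<bar> * (\<integral>\<^sup>+x. ennreal (indicator {0..} (0 + 1/b*x) * (0 + 1/b*x) powr (m-1) * exp(-b*(0+1/b*x))) \<partial>lborel)"
    by (rule nn_integral_real_affine) (use b in auto)
  also have "(\<lambda>x. ennreal (indicator {0..} (0 + 1/b*x) * (0 + 1/b*x) powr (m-1) * exp(-b*(0+1/b*x))))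
     = (\<lambda>x. ennreal (b powr (1-m)) * ennreal (indicator {0..} x * x powr (m - 1) / exp x))"
  proof
    fix x
    show "ennreal (indicator {0..} (0 + 1/b*x) * (0 + 1/b*x) powr (m-1) * exp(-b*(0+1/b*x)))
     = ennreal (b powr (1-m)) * ennreal (indicator {0..} x * x powr (m - 1) / exp x)"
    proof (cases "x \<ge> 0")
      case True
      have "(x/b) powr (m-1) = b powr (1-m) * x powr (m-1)"
        using b True by (simp add: powr_divide powr_minus_divide divide_simps powr_diff)
      then show ?thesis using True b
        by (simp add: indicator_def ennreal_mult'[symmetric] exp_minus field_simps)
    next
      case False
      then have "\<not> 0 \<le> x/b" using b by (simp add: divide_simps)
      then show ?thesis using False by (simp add: indicator_def)
    qed
  qed
  also have "(\<integral>\<^sup>+x. ennreal (b powr (1-m)) * ennreal (indicator {0..} x * x powr (m - 1) / exp x) \<partial>lborel)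
     = ennreal (b powr (1-m)) * ennreal (Gamma m)"
    by (subst nn_integral_cmult) (auto simp: Gamma_conv_nn_integral_real[OF m])
  also have "ennreal \<bar>1/b\<bar> * (ennreal (b powr (1-m)) * ennreal (Gamma m)) = ennreal (Gamma m / b powr m)"
    using b m Gamma_real_pos[OF m]
    by (simp add: ennreal_mult'[symmetric] powr_diff divide_simps)
  finally show ?thesis .
qed


context
  fixes m \<Omega> :: real assumes m: "m > 0" and Om: "\<Omega> > 0"
begin

lemma sets_N[simp, measurable_cong]: "sets (nakagami_power m \<Omega>) = sets borel"
  by (simp add: nakagami_power_def)

lemma space_N[simp]: "space (nakagami_power m \<Omega>) = UNIV"
  by (simp add: nakagami_power_def)

lemma N_nn:
  assumes [measurable]: "h \<in> borel_measurable borel"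
  shows "(\<integral>\<^sup>+x. h x \<partial>nakagami_power m \<Omega>) = (\<integral>\<^sup>+x. ennreal (gamma_pdf m \<Omega> x) * h x \<partial>lborel)"
  unfolding nakagami_power_def by (subst nn_integral_density) auto

lemma mgf:
  assumes s: "s < m / \<Omega>"
  shows "(\<integral>\<^sup>+x. ennreal (exp (s*x)) \<partial>nakagami_power m \<Omega>) = ennreal (1 / ((m/\<Omega> - s) * (\<Omega>/m)) powr m)"
proof -
  define b where "b = m/\<Omega> - s"
  have b: "b > 0" using s by (simp add: b_def)
  define Z where "Z = Gamma m * (\<Omega>/m) powr m"
  have Z: "Z > 0" using m Om Gamma_real_pos[OF m] by (simp add: Z_def)
  have "(\<integral>\<^sup>+x. ennreal (exp (s*x)) \<partial>nakagami_power m \<Omega>) = (\<integral>\<^sup>+x. ennreal (gamma_pdf m \<Omega> x) * ennreal (exp (s*x)) \<partial>lborel)"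
    by (rule N_nn) simp
  also have "\<dots> = (\<integral>\<^sup>+x. ennreal (1/Z) * ennreal (indicator {0..} x * x powr (m-1) * exp(-b*x)) \<partial>lborel)"
  proof (rule nn_integral_cong)
    fix x
    have "exp (- m * x / \<Omega>) * exp (s*x) = exp (-b*x)"
      by (simp add: b_def mult_exp_exp algebra_simps)
    then show "ennreal (gamma_pdf m \<Omega> x) * ennreal (exp (s*x)) = ennreal (1/Z) * ennreal (indicator {0..} x * x powr (m-1) * exp(-b*x))"
      using Z by (auto simp: gamma_pdf_def indicator_def Z_def ennreal_mult'[symmetric] field_simps)
  qed
  also have "\<dots> = ennreal (1/Z) * ennreal (Gamma m / b powr m)"
    using gamma_int[OF m b] by (subst nn_integral_cmult) auto
  also have "\<dots> = ennreal (1 / (b * (\<Omega>/m)) powr m)"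
  proof -
    have "(b * (\<Omega>/m)) powr m = b powr m * (\<Omega>/m) powr m"
      using b m Om powr_mult[of b "\<Omega>/m" m] by simp
    moreover have "Gamma m \<noteq> 0" using Gamma_real_pos[OF m] by simp
    ultimately show ?thesis using Z b m Om
      by (simp add: ennreal_mult'[symmetric] Z_def)
  qed
  finally show ?thesis by (simp add: b_def)
qed

lemma prob_N: "prob_space (nakagami_power m \<Omega>)"
proof
  have "emeasure (nakagami_power m \<Omega>) (space (nakagami_power m \<Omega>)) = (\<integral>\<^sup>+x. ennreal (exp (0*x)) \<partial>nakagami_power m \<Omega>)"
    by (simp add: nn_integral_const del: space_N)
  also have "\<dots> = 1" using m Om by (subst mgf) (auto simp: field_simps)
  finally show "emeasure (nakagami_power m \<Omega>) (space (nakagami_power m \<Omega>)) = 1" .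
qed

lemma rd_N: "real_distribution (nakagami_power m \<Omega>)"
  unfolding real_distribution_def real_distribution_axioms_def using prob_N by simp

lemma null_N: assumes A: "A \<in> null_sets lborel" shows "A \<in> null_sets (nakagami_power m \<Omega>)"
  unfolding nakagami_power_def
  by (subst null_sets_density_iff) (use AE_not_in[OF A] A in \<open>auto elim!: AE_mp\<close>)

lemma atom_N: "measure (nakagami_power m \<Omega>) {x} = 0"
proof -
  have "{x} \<in> null_sets lborel" by (intro countable_imp_null_set_lborel) auto
  from null_N[OF this] show ?thesis by (simp add: measure_def null_setsD1)
qed

lemma nonpos_N: "emeasure (nakagami_power m \<Omega>) {..0} = 0"
proof -
  have "emeasure (nakagami_power m \<Omega>) {..0} = (\<integral>\<^sup>+y. ennreal (gamma_pdf m \<Omega> y) * indicator {..0} y \<partial>lborel)"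
    unfolding nakagami_power_def by (subst emeasure_density) auto
  also have "\<dots> = (\<integral>\<^sup>+(y::real). (0::ennreal) \<partial>lborel)"
    by (rule nn_integral_cong_AE)
       (use AE_lborel_singleton[of 0] in \<open>auto elim!: AE_mp simp: gamma_pdf_def indicator_def\<close>)
  finally show ?thesis by simp
qed

definition "ta = \<bar>m - 1\<bar> + m / \<Omega>"
definition "tc = exp (-2 * ta) / (Gamma m * (\<Omega> / m) powr m)"

lemma ta_pos: "ta > 0" using m Om by (simp add: ta_def add_nonneg_pos)
lemma tc_pos: "tc > 0" using m Om Gamma_real_pos[OF m] by (simp add: tc_def)

lemma tail_N:
  assumes x: "x \<ge> 0"
  shows "measure (nakagami_power m \<Omega>) {x<..} \<ge> tc * exp (- ta * x)"
proof -
  define Z where "Z = Gamma m * (\<Omega>/m) powr m"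
  have Z: "Z > 0" using m Om Gamma_real_pos[OF m] by (simp add: Z_def)
  define L where "L = exp (- ta * (x+2)) / Z"
  have L: "L = tc * exp (- ta * x)"
    by (simp add: L_def tc_def Z_def algebra_simps mult_exp_exp[symmetric] exp_add[symmetric])
  have pt: "gamma_pdf m \<Omega> y \<ge> L" if y: "y \<in> {x+1..x+2}" for y
  proof -
    have y0: "y > 0" "y \<ge> 1" using y x by auto
    have l0: "ln y \<ge> 0" using y0 by simp
    have l1: "ln y \<le> x + 2" using ln_le_minus_one[OF y0(1)] y by simp
    have "\<bar>(m-1) * ln y\<bar> \<le> \<bar>m-1\<bar> * (x+2)"
      using l0 l1 by (simp add: abs_mult mult_left_mono)
    then have a1: "(m-1) * ln y \<ge> - (\<bar>m-1\<bar> * (x+2))" by linarith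
    have a2: "- m * y / \<Omega> \<ge> - (m / \<Omega> * (x+2))"
      using y m Om by (simp add: divide_simps mult_left_mono)
    have "exp (- ta * (x+2)) = exp (- (\<bar>m-1\<bar> * (x+2))) * exp (- (m / \<Omega> * (x+2)))"
      by (simp add: ta_def mult_exp_exp algebra_simps)
    also have "\<dots> \<le> exp ((m-1) * ln y) * exp (- m * y / \<Omega>)"
      using a1 a2 by (intro mult_mono) auto
    also have "\<dots> = y powr (m-1) * exp (- m * y / \<Omega>)"
      using y0 by (simp add: powr_def)
    finally show ?thesis using Z y0 by (simp add: gamma_pdf_def L_def Z_def divide_right_mono)
  qed
  have "ennreal L = (\<integral>\<^sup>+y. ennreal L * indicator {x+1..x+2} y \<partial>lborel)"
    by (subst nn_integral_cmult_indicator) auto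
  also have "\<dots> \<le> (\<integral>\<^sup>+y. ennreal (gamma_pdf m \<Omega> y) * indicator {x<..} y \<partial>lborel)"
    by (rule nn_integral_mono) (use pt in \<open>auto simp: indicator_def intro!: ennreal_leI\<close>)
  also have "\<dots> = emeasure (nakagami_power m \<Omega>) {x<..}"
    unfolding nakagami_power_def by (subst emeasure_density) auto
  also have "\<dots> = ennreal (measure (nakagami_power m \<Omega>) {x<..})"
    using finite_measure.emeasure_eq_measure[OF prob_space.finite_measure[OF prob_N]] by simp
  finally have "L \<le> measure (nakagami_power m \<Omega>) {x<..}"
    by (subst (asm) ennreal_le_iff) auto
  then show ?thesis using L by simp
qed

lemma tail_choose:
  assumes p: "0 < p" "p < 1"
  shows "\<exists>T\<ge>0. measure (nakagami_power m \<Omega>) {T<..} = p"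
proof -
  interpret real_distribution "nakagami_power m \<Omega>" by (rule rd_N)
  have tl: "measure (nakagami_power m \<Omega>) {T<..} = 1 - cdf (nakagami_power m \<Omega>) T" for T
  proof -
    have "{T<..} = space (nakagami_power m \<Omega>) - {..T}" by auto
    then show ?thesis using prob_compl[of "{..T}"] by (simp add: cdf_def)
  qed
  have c0: "cdf (nakagami_power m \<Omega>) 0 = 0"
    using nonpos_N by (simp add: cdf_def measure_def)
  have "\<forall>\<^sub>F x in at_top. cdf (nakagami_power m \<Omega>) x > 1 - p"
    using cdf_lim_at_top_prob p by (intro order_tendstoD) auto
  then obtain x1 where x1: "\<And>x. x \<ge> x1 \<Longrightarrow> cdf (nakagami_power m \<Omega>) x > 1 - p"
    by (auto simp: eventually_at_top_linorder)
  define b where "b = max x1 0"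
  have cont: "continuous_on {0..b} (cdf (nakagami_power m \<Omega>))"
    by (intro continuous_at_imp_continuous_on ballI) (simp add: isCont_cdf atom_N)
  have "cdf (nakagami_power m \<Omega>) b > 1 - p" using x1[of b] by (simp add: b_def)
  then have "\<exists>T. 0 \<le> T \<and> T \<le> b \<and> cdf (nakagami_power m \<Omega>) T = 1 - p"
    using c0 p by (intro IVT'[OF _ _ _ cont]) (auto simp: b_def)
  then obtain T where T: "0 \<le> T" "T \<le> b" "cdf (nakagami_power m \<Omega>) T = 1 - p" by blast
  then show ?thesis using tl by (intro exI[of _ T]) auto
qed

end




context
  fixes N :: "real measure" assumes PN: "prob_space N" and SN: "sets N = sets borel"
begin

lemma comp_meas[measurable]: "(\<lambda>g. g c) \<in> borel_measurable (PiM I (\<lambda>_. N))"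
proof (cases "c \<in> I")
  case True
  have "(\<lambda>g. g c) \<in> measurable (PiM I (\<lambda>_. N)) N" by (rule measurable_component_singleton[OF True])
  then show ?thesis using measurable_cong_sets[OF refl SN] by blast
next
  case False
  have "(\<lambda>g. undefined) \<in> borel_measurable (PiM I (\<lambda>_. N))" by (rule measurable_const) simp
  moreover have "\<And>g. g \<in> space (PiM I (\<lambda>_. N)) \<Longrightarrow> undefined = g c"
    using False by (auto simp: space_PiM PiE_def extensional_def)
  ultimately show ?thesis using measurable_cong[of "PiM I (\<lambda>_. N)" "\<lambda>g. undefined" "\<lambda>g. g c" borel] by simp
qed

interpretation PS: product_sigma_finite "\<lambda>_. N"
  unfolding product_sigma_finite_def using prob_space_imp_sigma_finite[OF PN] by simp

lemma sub_prod:
  assumes K: "finite K" "Dg \<subseteq> K" and H: "\<And>c. c \<in> Dg \<Longrightarrow> H c \<in> borel_measurable borel"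
  shows "(\<integral>\<^sup>+x. (\<Prod>c\<in>Dg. H c (x c)) \<partial>PiM K (\<lambda>_. N)) = (\<Prod>c\<in>Dg. (\<integral>\<^sup>+v. H c v \<partial>N))"
proof -
  define H' where "H' c = (if c \<in> Dg then H c else (\<lambda>_. 1))" for c
  have fD: "finite Dg" using K finite_subset by blast
  have "(\<integral>\<^sup>+x. (\<Prod>c\<in>Dg. H c (x c)) \<partial>PiM K (\<lambda>_. N)) = (\<integral>\<^sup>+x. (\<Prod>c\<in>K. H' c (x c)) \<partial>PiM K (\<lambda>_. N))"
  proof (intro nn_integral_cong)
    fix x
    show "(\<Prod>c\<in>Dg. H c (x c)) = (\<Prod>c\<in>K. H' c (x c))"
      by (rule prod.mono_neutral_cong_right[OF K(1,2), symmetric]) (auto simp: H'_def)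
  qed
  also have "\<dots> = (\<Prod>c\<in>K. (\<integral>\<^sup>+v. H' c v \<partial>N))"
  proof (rule PS.product_nn_integral_prod[OF K(1)])
    fix c assume "c \<in> K"
    have eq: "borel_measurable N = borel_measurable borel" by (rule measurable_cong_sets[OF SN refl])
    show "H' c \<in> borel_measurable N"
      using H by (auto simp: H'_def eq)
  qed
  also have "\<dots> = (\<Prod>c\<in>Dg. (\<integral>\<^sup>+v. H c v \<partial>N))"
    by (rule prod.mono_neutral_cong_right[OF K(1,2)])
       (use prob_space.emeasure_space_1[OF PN] in \<open>auto simp: H'_def\<close>)
  finally show ?thesis .
qed


interpretation PNi: prob_space N by (rule PN)

lemma spN: "space N = UNIV" using sets_eq_imp_space_eq[OF SN] by simp

lemma ind_int:
  assumes a: "a \<ge> 0"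
  shows "(\<integral>\<^sup>+x. ennreal (if x > T then a else 1) \<partial>N) = ennreal (1 + measure N {T<..} * (a - 1))"
proof -
  have s1: "{T<..} \<in> sets N" "{..T} \<in> sets N" using SN by auto
  have "(\<integral>\<^sup>+x. ennreal (if x > T then a else 1) \<partial>N) = (\<integral>\<^sup>+x. ennreal a * indicator {T<..} x + indicator {..T} x \<partial>N)"
    by (intro nn_integral_cong) (auto simp: indicator_def)
  also have "\<dots> = ennreal a * emeasure N {T<..} + emeasure N {..T}"
    using s1 by (subst nn_integral_add) (auto simp: nn_integral_cmult_indicator)
  also have "\<dots> = ennreal (a * measure N {T<..} + measure N {..T})"
    using a by (simp add: PNi.emeasure_eq_measure ennreal_mult' ennreal_plus)
  also have "measure N {..T} = 1 - measure N {T<..}"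
  proof -
    have "{..T} = space N - {T<..}" using spN by auto
    then show ?thesis using PNi.prob_compl[OF s1(1)] by simp
  qed
  finally show ?thesis by (simp add: algebra_simps)
qed

lemma diag_int:
  assumes h: "h \<in> borel_measurable borel"
  shows "(\<integral>\<^sup>+g. (\<Prod>j<n. h (g (j,j))) \<partial>PiM ({..<n}\<times>{..<n}) (\<lambda>_. N)) = (\<integral>\<^sup>+v. h v \<partial>N) ^ n"
proof -
  have inj: "inj_on (\<lambda>j::nat. (j,j)) A" for A by (auto simp: inj_on_def)
  have "(\<integral>\<^sup>+g. (\<Prod>j<n. h (g (j,j))) \<partial>PiM ({..<n}\<times>{..<n}) (\<lambda>_. N))
      = (\<integral>\<^sup>+g. (\<Prod>c\<in>(\<lambda>j. (j,j)) ` {..<n}. h (g c)) \<partial>PiM ({..<n}\<times>{..<n}) (\<lambda>_. N))"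
    by (intro nn_integral_cong) (simp add: prod.reindex[OF inj])
  also have "\<dots> = (\<Prod>c\<in>(\<lambda>j. (j,j)) ` {..<n}. (\<integral>\<^sup>+v. h v \<partial>N))"
    by (rule sub_prod) (use h in auto)
  also have "\<dots> = (\<integral>\<^sup>+v. h v \<partial>N) ^ n"
    by (simp add: card_image[OF inj])
  finally show ?thesis .
qed


lemma col_int:
  assumes i: "i < n" and mg: "(\<integral>\<^sup>+v. ennreal (exp (s * v)) \<partial>N) = ennreal Mr" and Mr: "Mr \<ge> 0"
  shows "(\<integral>\<^sup>+g. ennreal (if g(i,i) > T then 1 else 0) *
            (\<Prod>j\<in>{..<n}-{i}. ennreal (if g(j,j) > T then exp (s * g(j,i)) else 1))
          \<partial>PiM ({..<n}\<times>{..<n}) (\<lambda>_. N))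
       = ennreal (measure N {T<..}) * ennreal (1 + measure N {T<..} * (Mr - 1)) ^ (n-1)"
proof -
  define D where "D = {..<n::nat}"
  define J where "J = D - {i}"
  define Oc where "Oc = (\<lambda>j. (j,i)) ` J"
  define R where "R = D \<times> D - Oc"
  define A where "A u = ennreal (if u > T then 1 else 0)" for u :: real
  define \<phi> where "\<phi> u v = ennreal (if u > T then exp (s * v) else 1)" for u v :: real
  define \<psi> where "\<psi> u = ennreal (if u > T then Mr else 1)" for u :: real
  define F where "F g = A (g(i,i)) * (\<Prod>j\<in>J. \<phi> (g(j,j)) (g(j,i)))" for g :: "nat \<times> nat \<Rightarrow> real"
  have injO: "inj_on (\<lambda>j. (j,i)) A" for A by (auto simp: inj_on_def)
  have injD: "inj_on (\<lambda>j::nat. (j,j)) A" for A by (auto simp: inj_on_def)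
  have OD: "Oc \<subseteq> D \<times> D" using i by (auto simp: Oc_def J_def D_def)
  have IRO: "D \<times> D = R \<union> Oc" using OD by (auto simp: R_def)
  have disj: "R \<inter> Oc = {}" by (auto simp: R_def)
  have fin: "finite R" "finite Oc" by (auto simp: R_def Oc_def J_def D_def)
  have iiR: "(i,i) \<in> R" using i by (auto simp: R_def Oc_def J_def D_def)
  have jjR: "(j,j) \<in> R" if "j \<in> J" for j using that by (auto simp: R_def Oc_def J_def D_def)
  have jiO: "(j,i) \<in> Oc" if "j \<in> J" for j using that by (auto simp: Oc_def)
  have jinR: "(j,i) \<notin> R" if "j \<in> J" for j using that by (auto simp: R_def Oc_def)
  have Am[measurable]: "A \<in> borel_measurable borel" unfolding A_def by measurable
  have phm[measurable]: "(\<lambda>v. \<phi> u v) \<in> borel_measurable borel" for u unfolding \<phi>_def by measurable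
  have psm[measurable]: "\<psi> \<in> borel_measurable borel" unfolding \<psi>_def by measurable
  have Fm: "F \<in> borel_measurable (PiM (R \<union> Oc) (\<lambda>_. N))"
    unfolding F_def A_def \<phi>_def by measurable
  have lhs: "(\<lambda>g. ennreal (if g(i,i) > T then 1 else 0) *
            (\<Prod>j\<in>{..<n}-{i}. ennreal (if g(j,j) > T then exp (s * g(j,i)) else 1))) = F"
    by (simp add: F_def A_def \<phi>_def J_def D_def fun_eq_iff)
  have "(\<integral>\<^sup>+g. F g \<partial>PiM (D \<times> D) (\<lambda>_. N)) = (\<integral>\<^sup>+g. F g \<partial>PiM (R \<union> Oc) (\<lambda>_. N))"
    by (simp only: IRO)
  also have "\<dots> = (\<integral>\<^sup>+x. (\<integral>\<^sup>+y. F (merge R Oc (x, y)) \<partial>PiM Oc (\<lambda>_. N)) \<partial>PiM R (\<lambda>_. N))"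
    by (rule PS.product_nn_integral_fold[OF disj fin Fm])
  also have "\<dots> = (\<integral>\<^sup>+x. A (x(i,i)) * (\<Prod>j\<in>J. \<psi> (x(j,j))) \<partial>PiM R (\<lambda>_. N))"
  proof (rule nn_integral_cong)
    fix x
    have "(\<integral>\<^sup>+y. F (merge R Oc (x, y)) \<partial>PiM Oc (\<lambda>_. N))
        = (\<integral>\<^sup>+y. A (x(i,i)) * (\<Prod>c\<in>Oc. \<phi> (x(fst c, fst c)) (y c)) \<partial>PiM Oc (\<lambda>_. N))"
    proof (rule nn_integral_cong)
      fix y
      have "F (merge R Oc (x, y)) = A (x(i,i)) * (\<Prod>j\<in>J. \<phi> (x(j,j)) (y(j,i)))"
        unfolding F_def using iiR jjR jiO jinR
        by (auto simp: merge_def intro!: prod.cong arg_cong2[where f="(*)"])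
      also have "\<dots> = A (x(i,i)) * (\<Prod>c\<in>Oc. \<phi> (x(fst c, fst c)) (y c))"
        by (simp add: Oc_def prod.reindex[OF injO])
      finally show "F (merge R Oc (x, y)) = A (x(i,i)) * (\<Prod>c\<in>Oc. \<phi> (x(fst c, fst c)) (y c))" .
    qed
    also have "\<dots> = A (x(i,i)) * (\<integral>\<^sup>+y. (\<Prod>c\<in>Oc. \<phi> (x(fst c, fst c)) (y c)) \<partial>PiM Oc (\<lambda>_. N))"
      by (rule nn_integral_cmult) measurable
    also have "(\<integral>\<^sup>+y. (\<Prod>c\<in>Oc. \<phi> (x(fst c, fst c)) (y c)) \<partial>PiM Oc (\<lambda>_. N))
        = (\<Prod>c\<in>Oc. (\<integral>\<^sup>+v. \<phi> (x(fst c, fst c)) v \<partial>N))"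
      by (rule sub_prod) (use fin in auto)
    also have "\<dots> = (\<Prod>c\<in>Oc. \<psi> (x(fst c, fst c)))"
    proof (rule prod.cong[OF refl])
      fix c
      show "(\<integral>\<^sup>+v. \<phi> (x(fst c, fst c)) v \<partial>N) = \<psi> (x(fst c, fst c))"
        using mg PNi.emeasure_space_1 by (simp add: \<phi>_def \<psi>_def nn_integral_const)
    qed
    also have "\<dots> = (\<Prod>j\<in>J. \<psi> (x(j,j)))"
      by (simp add: Oc_def prod.reindex[OF injO])
    finally show "(\<integral>\<^sup>+y. F (merge R Oc (x, y)) \<partial>PiM Oc (\<lambda>_. N)) = A (x(i,i)) * (\<Prod>j\<in>J. \<psi> (x(j,j)))" .
  qed
  also have "\<dots> = (\<integral>\<^sup>+x. (\<Prod>c\<in>(\<lambda>j. (j,j)) ` D. (if c = (i,i) then A else \<psi>) (x c)) \<partial>PiM R (\<lambda>_. N))"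
  proof (rule nn_integral_cong)
    fix x
    have iD: "i \<in> D" using i by (simp add: D_def)
    have "(\<Prod>c\<in>(\<lambda>j. (j,j)) ` D. (if c = (i,i) then A else \<psi>) (x c))
        = (\<Prod>j\<in>D. (if j = i then A else \<psi>) (x (j,j)))"
      by (simp add: prod.reindex[OF injD])
    also have "\<dots> = A (x(i,i)) * (\<Prod>j\<in>J. \<psi> (x(j,j)))"
      using iD by (simp add: J_def D_def prod.remove[of "{..<n}" i])
    finally show "A (x(i,i)) * (\<Prod>j\<in>J. \<psi> (x(j,j))) = (\<Prod>c\<in>(\<lambda>j. (j,j)) ` D. (if c = (i,i) then A else \<psi>) (x c))" by simp
  qed
  also have "\<dots> = (\<Prod>c\<in>(\<lambda>j. (j,j)) ` D. (\<integral>\<^sup>+v. (if c = (i,i) then A else \<psi>) v \<partial>N))"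
    by (rule sub_prod) (use fin jjR iiR in \<open>auto simp: J_def\<close>)
  also have "\<dots> = (\<Prod>j\<in>D. (\<integral>\<^sup>+v. (if j = i then A else \<psi>) v \<partial>N))"
    by (simp add: prod.reindex[OF injD])
  also have "\<dots> = (\<integral>\<^sup>+v. A v \<partial>N) * (\<Prod>j\<in>J. (\<integral>\<^sup>+v. \<psi> v \<partial>N))"
    using i by (simp add: J_def D_def prod.remove[of "{..<n}" i])
  also have "(\<integral>\<^sup>+v. A v \<partial>N) = ennreal (measure N {T<..})"
  proof -
    have "(\<integral>\<^sup>+v. A v \<partial>N) = (\<integral>\<^sup>+v. indicator {T<..} v \<partial>N)"
      by (intro nn_integral_cong) (auto simp: A_def indicator_def)
    also have "\<dots> = ennreal (measure N {T<..})"
      using SN by (simp add: PNi.emeasure_eq_measure)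
    finally show ?thesis .
  qed
  also have "(\<Prod>j\<in>J. (\<integral>\<^sup>+v. \<psi> v \<partial>N)) = ennreal (1 + measure N {T<..} * (Mr - 1)) ^ (n-1)"
    using i by (simp add: \<psi>_def ind_int[OF Mr] J_def D_def)
  finally show ?thesis by (simp add: lhs D_def)
qed


lemma nonpos_int:
  assumes np: "emeasure N {..0} = 0" and c: "c \<in> K" and K: "finite K"
  shows "(\<integral>\<^sup>+g. ennreal (if g c \<le> 0 then 1 else 0) \<partial>PiM K (\<lambda>_. N)) = 0"
proof -
  have "(\<integral>\<^sup>+g. ennreal (if g c \<le> 0 then 1 else 0) \<partial>PiM K (\<lambda>_. N))
      = (\<integral>\<^sup>+g. (\<Prod>c'\<in>{c}. (\<lambda>v. ennreal (if v \<le> 0 then 1 else 0)) (g c')) \<partial>PiM K (\<lambda>_. N))" by simp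
  also have "\<dots> = (\<Prod>c'\<in>{c}. (\<integral>\<^sup>+v. ennreal (if v \<le> 0 then 1 else 0) \<partial>N))"
    by (rule sub_prod) (use c K in auto)
  also have "(\<integral>\<^sup>+v. ennreal (if v \<le> 0 then 1 else 0) \<partial>N) = (\<integral>\<^sup>+v. indicator {..0} v \<partial>N)"
    by (intro nn_integral_cong) (auto simp: indicator_def)
  also have "\<dots> = 0" using np SN by simp
  finally show ?thesis by simp
qed

end

lemma prod_if_exp:
  assumes "finite A"
  shows "(\<Prod>j\<in>A. if P j then exp(-1) else 1::real) = exp (- real (card {j\<in>A. P j}))"
proof -
  have "(\<Prod>j\<in>A. if P j then exp(-1) else 1::real) = exp(-1) ^ card (A \<inter> {j. P j})"
    using assms by (simp add: prod.If_cases)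
  also have "A \<inter> {j. P j} = {j\<in>A. P j}" by auto
  finally show ?thesis by (simp add: exp_of_nat_mult[symmetric])
qed

lemma prod_exp_sum:
  assumes "finite A"
  shows "(\<Prod>j\<in>A. if Q j then exp(s * x j) else 1::real) = exp (s * (\<Sum>j\<in>A. if Q j then x j else 0))"
  using assms by (simp add: exp_sum sum_distrib_left if_distrib cong: if_cong)




lemma det:
  fixes g :: "nat \<times> nat \<Rightarrow> real"
  assumes pos: "\<forall>a<n. \<forall>b<n. g(a,b) > 0" and k: "1 \<le> k" and nk: "N0 > 0 \<or> 2 \<le> k"
    and N0: "N0 \<ge> 0" and \<beta>: "\<beta> > 0"
    and G2: "k \<le> card {i\<in>{..<n}. g(i,i) > T}"
    and G3: "\<forall>i<n. g(i,i) > T \<longrightarrow> (\<Sum>j\<in>{..<n}-{i}. if g(j,j) > T then g(j,i) else 0) \<le> T/\<beta> - N0"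
    and top: "top_direct_set n g k S"
  shows "k \<le> throughput n g N0 \<beta> S"
proof -
  define C where "C = {i\<in>{..<n}. g(i,i) > T}"
  have SD: "S \<subseteq> {..<n}" and cS: "card S = k" and tp: "\<forall>i\<in>S. \<forall>j\<in>{..<n} - S. g (j, j) \<le> g (i, i)"
    using top by (auto simp: top_direct_set_def)
  have fS: "finite S" using SD finite_subset by blast
  have SC: "S \<subseteq> C"
  proof
    fix i assume iS: "i \<in> S"
    show "i \<in> C"
    proof (rule ccontr)
      assume "i \<notin> C"
      then have gi: "g(i,i) \<le> T" using iS SD by (auto simp: C_def)
      have "C \<subseteq> S - {i}"
      proof
        fix j assume jC: "j \<in> C"
        then have jD: "j < n" and gj: "g(j,j) > T" by (auto simp: C_def)
        have "j \<in> S" using tp iS jD gj gi by force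
        moreover have "j \<noteq> i" using gj gi by auto
        ultimately show "j \<in> S - {i}" by auto
      qed
      then have "card C \<le> card (S - {i})" using fS by (intro card_mono) auto
      also have "\<dots> = k - 1" using iS fS cS by simp
      finally show False using G2 k by (simp add: C_def)
    qed
  qed
  have succ: "SINR g N0 S i > \<beta>" if iS: "i \<in> S" for i
  proof -
    have iD: "i < n" using iS SD by auto
    define Y where "Y j = (if g(j,j) > T then g(j,i) else 0)" for j
    have Y0: "Y j \<ge> 0" if "j < n" for j using pos that iD by (auto simp: Y_def less_imp_le)
    have "(\<Sum>j\<in>S-{i}. g(j,i)) = (\<Sum>j\<in>S-{i}. Y j)"
      using SC by (intro sum.cong) (auto simp: Y_def C_def)
    also have "\<dots> \<le> (\<Sum>j\<in>{..<n}-{i}. Y j)"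
      using SD Y0 by (intro sum_mono2) auto
    also have "\<dots> \<le> T/\<beta> - N0" using G3 iD SC iS by (auto simp: Y_def C_def)
    finally have I: "(\<Sum>j\<in>S-{i}. g(j,i)) \<le> T/\<beta> - N0" .
    have Ipos: "(\<Sum>j\<in>S-{i}. g(j,i)) \<ge> 0"
      using pos SD iD by (intro sum_nonneg) (auto intro: less_imp_le)
    have d: "N0 + (\<Sum>j\<in>S-{i}. g(j,i)) > 0"
    proof (cases "N0 > 0")
      case True then show ?thesis using Ipos by linarith
    next
      case False
      then have "card (S - {i}) \<ge> 1" using nk iS fS cS by simp
      then have "S - {i} \<noteq> {}" by (metis card.empty not_one_le_zero)
      then have "(\<Sum>j\<in>S-{i}. g(j,i)) > 0"
        using pos SD iD fS by (intro sum_pos) auto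
      then show ?thesis using N0 by linarith
    qed
    have gT: "g(i,i) > T" using SC iS by (auto simp: C_def)
    have "\<beta> * (N0 + (\<Sum>j\<in>S-{i}. g(j,i))) \<le> T"
      using I \<beta> by (simp add: field_simps)
    then have "\<beta> * (N0 + (\<Sum>j\<in>S-{i}. g(j,i))) < g(i,i)" using gT by linarith
    then show ?thesis using iS d by (simp add: SINR_def field_simps)
  qed
  have "S \<subseteq> {i\<in>{..<n}. SINR g N0 S i > \<beta>}" using succ SD by auto
  then have "card S \<le> throughput n g N0 \<beta> S"
    unfolding throughput_def by (intro card_mono) auto
  then show ?thesis using cS by simp
qed


context
  fixes N :: "real measure" assumes PN: "prob_space N" and SN: "sets N = sets borel"
begin

lemma main_bound:
  fixes n k :: nat and T s Mr R :: real and E :: "(nat \<times> nat \<Rightarrow> real) set"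
  assumes np: "emeasure N {..0} = 0"
    and mg: "(\<integral>\<^sup>+v. ennreal (exp (s * v)) \<partial>N) = ennreal Mr" and Mr: "Mr \<ge> 0" and s: "s \<ge> 0"
    and E: "E \<in> sets (PiM ({..<n}\<times>{..<n}) (\<lambda>_. N))"
    and EG: "\<And>g. g \<in> space (PiM ({..<n}\<times>{..<n}) (\<lambda>_. N)) \<Longrightarrow> (\<forall>a<n. \<forall>b<n. g(a,b) > 0) \<Longrightarrow>
        k \<le> card {i\<in>{..<n}. g(i,i) > T} \<Longrightarrow>
        (\<forall>i<n. g(i,i) > T \<longrightarrow> (\<Sum>j\<in>{..<n}-{i}. if g(j,j) > T then g(j,i) else 0) \<le> R) \<Longrightarrow> g \<in> E"
  shows "measure (PiM ({..<n}\<times>{..<n}) (\<lambda>_. N)) E \<ge> 1 -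
    (exp (real k) * (1 + measure N {T<..} * (exp (-1) - 1)) ^ n
     + real n * (exp (- s * R) * (measure N {T<..} * (1 + measure N {T<..} * (Mr - 1)) ^ (n - 1))))"
proof -
  define D where "D = {..<n}"
  define P where "P = PiM (D \<times> D) (\<lambda>_. N)"
  define p where "p = measure N {T<..}"
  have p01: "0 \<le> p" "p \<le> 1" unfolding p_def using PN by (auto intro: prob_space.prob_le_1)
  interpret P: prob_space P unfolding P_def by (intro prob_space_PiM PN)
  define F1 where "F1 g = (\<Sum>c\<in>D\<times>D. ennreal (if g c \<le> 0 then 1 else 0))" for g :: "nat \<times> nat \<Rightarrow> real"
  define F2 where "F2 g = ennreal (exp (real k)) * (\<Prod>j\<in>D. ennreal (if g(j,j) > T then exp (-1) else 1))" for g :: "nat \<times> nat \<Rightarrow> real"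
  define F3 where "F3 g = (\<Sum>i\<in>D. ennreal (exp (- s * R)) * (ennreal (if g(i,i) > T then 1 else 0) *
            (\<Prod>j\<in>D-{i}. ennreal (if g(j,j) > T then exp (s * g(j,i)) else 1))))" for g :: "nat \<times> nat \<Rightarrow> real"
  note cm[measurable] = comp_meas[OF PN SN]
  have F1m: "F1 \<in> borel_measurable P" unfolding F1_def P_def by measurable
  have F2m: "F2 \<in> borel_measurable P" unfolding F2_def P_def by measurable
  have F3m: "F3 \<in> borel_measurable P" unfolding F3_def P_def by measurable
  have I1: "(\<integral>\<^sup>+g. F1 g \<partial>P) = 0"
    unfolding F1_def P_def
    by (subst nn_integral_sum) (auto simp: nonpos_int[OF PN SN np] D_def intro: measurable_compose[OF cm])
  define q where "q = 1 + p * (exp (-1) - 1)"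
  define q3 where "q3 = 1 + p * (Mr - 1)"
  have q0: "q \<ge> 0"
  proof -
    have "p * (exp (-1) - 1) \<ge> p * (-1)" using p01
      by (intro mult_left_mono) auto
    then show ?thesis using p01 by (simp add: q_def)
  qed
  have q30: "q3 \<ge> 0"
  proof -
    have "p * (Mr - 1) \<ge> p * (-1)" using p01 Mr
      by (intro mult_left_mono) auto
    then show ?thesis using p01 by (simp add: q3_def)
  qed
  have I2: "(\<integral>\<^sup>+g. F2 g \<partial>P) = ennreal (exp (real k) * q ^ n)"
  proof -
    have "(\<integral>\<^sup>+g. F2 g \<partial>P) = ennreal (exp (real k)) *
        (\<integral>\<^sup>+g. (\<Prod>j<n. (\<lambda>u. ennreal (if u > T then exp (-1) else 1)) (g(j,j))) \<partial>PiM ({..<n}\<times>{..<n}) (\<lambda>_. N))"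
    proof -
      have m: "(\<lambda>g. \<Prod>j<n. (\<lambda>u. ennreal (if u > T then exp (-1) else 1)) (g(j,j))) \<in> borel_measurable (PiM ({..<n}\<times>{..<n}) (\<lambda>_. N))"
        by measurable
      show ?thesis unfolding F2_def P_def D_def using nn_integral_cmult[OF m] by simp
    qed
    also have "\<dots> = ennreal (exp (real k)) * (\<integral>\<^sup>+u. ennreal (if u > T then exp (-1) else 1) \<partial>N) ^ n"
      by (subst diag_int[OF PN SN]) auto
    also have "\<dots> = ennreal (exp (real k)) * ennreal q ^ n"
      by (subst ind_int[OF PN SN]) (auto simp: q_def p_def)
    also have "\<dots> = ennreal (exp (real k) * q ^ n)"
      using q0 by (simp add: ennreal_power ennreal_mult')
    finally show ?thesis .
  qed
  have I3: "(\<integral>\<^sup>+g. F3 g \<partial>P) = ennreal (real n * (exp (- s * R) * (p * q3 ^ (n - 1))))"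
  proof -
    have "(\<integral>\<^sup>+g. F3 g \<partial>P) = (\<Sum>i\<in>D. (\<integral>\<^sup>+g. ennreal (exp (- s * R)) * (ennreal (if g(i,i) > T then 1 else 0) *
            (\<Prod>j\<in>D-{i}. ennreal (if g(j,j) > T then exp (s * g(j,i)) else 1))) \<partial>P))"
    proof -
      have m: "(\<lambda>g. ennreal (exp (- s * R)) * (ennreal (if g(i,i) > T then 1 else 0) *
            (\<Prod>j\<in>D-{i}. ennreal (if g(j,j) > T then exp (s * g(j,i)) else 1)))) \<in> borel_measurable P" for i
        unfolding P_def by measurable
      show ?thesis unfolding F3_def using nn_integral_sum[OF m] by simp
    qed
    also have "\<dots> = (\<Sum>i\<in>D. ennreal (exp (- s * R)) * (ennreal p * ennreal q3 ^ (n - 1)))"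
    proof (rule sum.cong[OF refl])
      fix i assume "i \<in> D"
      then have i: "i < n" by (simp add: D_def)
      show "(\<integral>\<^sup>+g. ennreal (exp (- s * R)) * (ennreal (if g(i,i) > T then 1 else 0) *
            (\<Prod>j\<in>D-{i}. ennreal (if g(j,j) > T then exp (s * g(j,i)) else 1))) \<partial>P)
          = ennreal (exp (- s * R)) * (ennreal p * ennreal q3 ^ (n - 1))"
      proof -
        have m: "(\<lambda>g. ennreal (if g(i,i) > T then 1 else 0) *
            (\<Prod>j\<in>D-{i}. ennreal (if g(j,j) > T then exp (s * g(j,i)) else 1))) \<in> borel_measurable P"
          unfolding P_def by measurable
        show ?thesis using nn_integral_cmult[OF m] unfolding P_def D_def
          by (simp add: col_int[OF PN SN i mg Mr] p_def q3_def)
      qed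
    qed
    also have "\<dots> = ennreal (real n * (exp (- s * R) * (p * q3 ^ (n - 1))))"
      using p01 q30 by (simp add: D_def ennreal_power ennreal_mult' ennreal_of_nat_eq_real_of_nat)
    finally show ?thesis .
  qed
  have pw: "indicator (space P - E) g \<le> F1 g + F2 g + F3 g" if g: "g \<in> space P" for g
  proof (cases "g \<in> E")
    case True then show ?thesis by simp
  next
    case False
    have "1 \<le> F1 g + F2 g + F3 g"
    proof (rule ccontr)
      assume less: "\<not> 1 \<le> F1 g + F2 g + F3 g"
      have F1le: "F1 g \<le> F1 g + F2 g + F3 g" by (simp add: add.assoc)
      have F2le: "F2 g \<le> F1 g + F2 g + F3 g" by (simp add: add.commute add.left_commute)
      have F3le: "F3 g \<le> F1 g + F2 g + F3 g" by (simp add: add.commute add.left_commute)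
      have G1: "\<forall>a<n. \<forall>b<n. g(a,b) > 0"
      proof (intro allI impI, rule ccontr)
        fix a b assume ab: "a < n" "b < n" "\<not> g(a,b) > 0"
        have "ennreal (if g (a,b) \<le> 0 then 1 else 0) \<le> F1 g"
          unfolding F1_def by (rule member_le_sum) (use ab in \<open>auto simp: D_def\<close>)
        then have "1 \<le> F1 g" using ab by simp
        then show False using less F1le by (meson order.trans)
      qed
      have G2: "k \<le> card {i\<in>{..<n}. g(i,i) > T}"
      proof (rule ccontr)
        assume ck: "\<not> k \<le> card {i\<in>{..<n}. g(i,i) > T}"
        have eq: "F2 g = ennreal (exp (real k) * exp (- real (card {i\<in>{..<n}. g(i,i) > T})))"
          unfolding F2_def D_def
          by (subst prod_ennreal) (auto simp: prod_if_exp ennreal_mult'[symmetric])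
        have "exp (real k) * exp (- real (card {i\<in>{..<n}. g(i,i) > T})) \<ge> 1"
          using ck by (simp add: mult_exp_exp)
        then have "ennreal 1 \<le> ennreal (exp (real k) * exp (- real (card {i\<in>{..<n}. g(i,i) > T})))"
          by (rule ennreal_leI)
        then have "1 \<le> F2 g" unfolding eq by simp
        then show False using less F2le by (meson order.trans)
      qed
      have G3: "\<forall>i<n. g(i,i) > T \<longrightarrow> (\<Sum>j\<in>{..<n}-{i}. if g(j,j) > T then g(j,i) else 0) \<le> R"
      proof (intro allI impI, rule ccontr)
        fix i assume i: "i < n" "g(i,i) > T" and gt: "\<not> (\<Sum>j\<in>{..<n}-{i}. if g(j,j) > T then g(j,i) else 0) \<le> R"
        define Y where "Y = (\<Sum>j\<in>{..<n}-{i}. if g(j,j) > T then g(j,i) else 0)"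
        have "ennreal (exp (- s * R)) * (ennreal (if g(i,i) > T then 1 else 0) *
            (\<Prod>j\<in>D-{i}. ennreal (if g(j,j) > T then exp (s * g(j,i)) else 1))) \<le> F3 g"
          unfolding F3_def by (rule member_le_sum) (use i in \<open>auto simp: D_def\<close>)
        also have "ennreal (exp (- s * R)) * (ennreal (if g(i,i) > T then 1 else 0) *
            (\<Prod>j\<in>D-{i}. ennreal (if g(j,j) > T then exp (s * g(j,i)) else 1))) = ennreal (exp (- s * R) * exp (s * Y))"
          using i unfolding D_def Y_def
          by (subst prod_ennreal) (auto simp: prod_exp_sum ennreal_mult'[symmetric])
        finally have leF3: "ennreal (exp (- s * R) * exp (s * Y)) \<le> F3 g" .
        have "s * R \<le> s * Y" using gt s by (intro mult_left_mono) (auto simp: Y_def)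
        then have "exp (- s * R) * exp (s * Y) \<ge> 1" by (simp add: mult_exp_exp)
        then have e1: "ennreal 1 \<le> ennreal (exp (- s * R) * exp (s * Y))" by (rule ennreal_leI)
        from e1 leF3 have "ennreal 1 \<le> F3 g" by (rule order.trans)
        then have "1 \<le> F3 g" by (simp only: ennreal_1)
        then have "1 \<le> F1 g + F2 g + F3 g" using F3le by (rule order.trans)
        with less show False by simp
      qed
      have gs: "g \<in> space (PiM ({..<n}\<times>{..<n}) (\<lambda>_. N))" using g by (simp add: P_def D_def)
      have "g \<in> E" by (rule EG[OF gs G1 G2 G3])
      then show False using False by simp
    qed
    then show ?thesis using False g by simp
  qed
  have EP: "E \<in> sets P" using E by (simp add: P_def D_def)
  have "emeasure P (space P - E) = (\<integral>\<^sup>+g. indicator (space P - E) g \<partial>P)"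
    using EP by (subst nn_integral_indicator) auto
  also have "\<dots> \<le> (\<integral>\<^sup>+g. F1 g + F2 g + F3 g \<partial>P)"
    by (rule nn_integral_mono) (use pw in auto)
  also have "\<dots> = (\<integral>\<^sup>+g. F1 g \<partial>P) + (\<integral>\<^sup>+g. F2 g \<partial>P) + (\<integral>\<^sup>+g. F3 g \<partial>P)"
    using F1m F2m F3m by (simp add: nn_integral_add)
  also have "\<dots> = ennreal (exp (real k) * q ^ n + real n * (exp (- s * R) * (p * q3 ^ (n - 1))))"
  proof -
    have A: "0 \<le> exp (real k) * q ^ n" using q0 by simp
    have B: "0 \<le> real n * (exp (- s * R) * (p * q3 ^ (n - 1)))" using q30 p01 by simp
    show ?thesis unfolding I1 I2 I3 add_0_left by (rule ennreal_plus[OF A B, symmetric])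
  qed
  finally have "ennreal (measure P (space P - E)) \<le> ennreal (exp (real k) * q ^ n + real n * (exp (- s * R) * (p * q3 ^ (n - 1))))"
    by (simp add: P.emeasure_eq_measure)
  then have "measure P (space P - E) \<le> exp (real k) * q ^ n + real n * (exp (- s * R) * (p * q3 ^ (n - 1)))"
    using q0 q30 p01 by (subst (asm) ennreal_le_iff) (auto intro!: add_nonneg_nonneg mult_nonneg_nonneg)
  then have "1 - measure P E \<le> exp (real k) * q ^ n + real n * (exp (- s * R) * (p * q3 ^ (n - 1)))"
    using P.prob_compl[OF EP] by simp
  then show ?thesis by (simp add: P_def D_def q_def q3_def p_def)
qed

end



lemma card_filter_sum: "finite A \<Longrightarrow> card {x\<in>A. P x} = (\<Sum>x\<in>A. if P x then 1 else 0::nat)"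
  by (simp add: sum.If_cases Int_def conj_commute)

lemma SINR_meas:
  fixes N :: "real measure" assumes PN: "prob_space N" and SN: "sets N = sets borel"
  shows "(\<lambda>g. SINR g N0 S i) \<in> borel_measurable (PiM I (\<lambda>_. N))"
proof -
  note cm[measurable] = comp_meas[OF PN SN]
  show ?thesis
  proof (cases "i \<in> S")
    case True
    have "(\<lambda>g. g (i, i) / (N0 + (\<Sum>k\<in>S - {i}. g (k, i)))) \<in> borel_measurable (PiM I (\<lambda>_. N))"
      by measurable
    then show ?thesis using True by (simp add: SINR_def)
  next
    case False then show ?thesis by (simp add: SINR_def)
  qed
qed

lemma event_meas:
  fixes N :: "real measure" assumes PN: "prob_space N" and SN: "sets N = sets borel"
  shows "{g \<in> space (PiM ({..<n}\<times>{..<n}) (\<lambda>_. N)).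
           \<forall>S. top_direct_set n g k S \<longrightarrow> real (throughput n g N0 \<beta> S) \<ge> c} \<in> sets (PiM ({..<n}\<times>{..<n}) (\<lambda>_. N))"
proof -
  note cm[measurable] = comp_meas[OF PN SN]
  have eq: "{g \<in> space (PiM ({..<n}\<times>{..<n}) (\<lambda>_. N)).
           \<forall>S. top_direct_set n g k S \<longrightarrow> real (throughput n g N0 \<beta> S) \<ge> c}
    = {g \<in> space (PiM ({..<n}\<times>{..<n}) (\<lambda>_. N)). \<forall>S\<in>Pow {..<n}.
        (card S = k \<and> (\<forall>i\<in>S. \<forall>j\<in>{..<n} - S. g (j, j) \<le> g (i, i))) \<longrightarrow>
        c \<le> (\<Sum>i\<in>{..<n}. if SINR g N0 S i > \<beta> then 1 else 0::real)}"
  proof -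
    have tp: "real (throughput n g N0 \<beta> S) = (\<Sum>i\<in>{..<n}. if SINR g N0 S i > \<beta> then 1 else 0::real)" for g S
      unfolding throughput_def by (subst card_filter_sum) (auto simp: of_nat_sum intro!: sum.cong)
    show ?thesis by (auto simp: top_direct_set_def tp)
  qed
  note sm[measurable] = SINR_meas[OF PN SN]
  show ?thesis unfolding eq
  proof (rule sets.sets_Collect_finite_All)
    fix S assume S: "S \<in> Pow {..<n}"
    then have fS: "finite S" by (auto intro: finite_subset)
    show "{g \<in> space (PiM ({..<n}\<times>{..<n}) (\<lambda>_. N)).
        (card S = k \<and> (\<forall>i\<in>S. \<forall>j\<in>{..<n} - S. g (j, j) \<le> g (i, i))) \<longrightarrow>
        c \<le> (\<Sum>i\<in>{..<n}. if SINR g N0 S i > \<beta> then 1 else 0::real)} \<in> sets (PiM ({..<n}\<times>{..<n}) (\<lambda>_. N))"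
    proof (cases "card S = k")
      case False then show ?thesis by simp
    next
      case True
      have "{g \<in> space (PiM ({..<n}\<times>{..<n}) (\<lambda>_. N)).
        (\<forall>i\<in>S. \<forall>j\<in>{..<n} - S. g (j, j) \<le> g (i, i)) \<longrightarrow>
        c \<le> (\<Sum>i\<in>{..<n}. if SINR g N0 S i > \<beta> then 1 else 0::real)} \<in> sets (PiM ({..<n}\<times>{..<n}) (\<lambda>_. N))"
      proof (rule sets.sets_Collect_imp)
        have hm: "(\<lambda>g. \<Sum>i\<in>{..<n}. if SINR g N0 S i > \<beta> then 1 else 0::real) \<in> borel_measurable (PiM ({..<n}\<times>{..<n}) (\<lambda>_. N))"
        proof (rule borel_measurable_sum)
          fix i
          have "{g \<in> space (PiM ({..<n}\<times>{..<n}) (\<lambda>_. N)). \<beta> < SINR g N0 S i} \<in> sets (PiM ({..<n}\<times>{..<n}) (\<lambda>_. N))"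
            by (rule borel_measurable_less) (auto intro: sm)
          then have "(\<lambda>g. indicator {g \<in> space (PiM ({..<n}\<times>{..<n}) (\<lambda>_. N)). \<beta> < SINR g N0 S i} g :: real)
             \<in> borel_measurable (PiM ({..<n}\<times>{..<n}) (\<lambda>_. N))"
            by (rule borel_measurable_indicator)
          moreover have "\<And>g. g \<in> space (PiM ({..<n}\<times>{..<n}) (\<lambda>_. N)) \<Longrightarrow>
              indicator {g \<in> space (PiM ({..<n}\<times>{..<n}) (\<lambda>_. N)). \<beta> < SINR g N0 S i} g = (if SINR g N0 S i > \<beta> then 1 else 0::real)"
            by (auto simp: indicator_def)
          ultimately show "(\<lambda>g. if SINR g N0 S i > \<beta> then 1 else 0::real) \<in> borel_measurable (PiM ({..<n}\<times>{..<n}) (\<lambda>_. N))"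
            using measurable_cong[of "PiM ({..<n}\<times>{..<n}) (\<lambda>_. N)"
                "\<lambda>g. indicator {g \<in> space (PiM ({..<n}\<times>{..<n}) (\<lambda>_. N)). \<beta> < SINR g N0 S i} g :: real"
                "\<lambda>g. if SINR g N0 S i > \<beta> then 1 else 0::real" borel] by blast
        qed
        show "{g \<in> space (PiM ({..<n}\<times>{..<n}) (\<lambda>_. N)). c \<le> (\<Sum>i\<in>{..<n}. if SINR g N0 S i > \<beta> then 1 else 0::real)}
            \<in> sets (PiM ({..<n}\<times>{..<n}) (\<lambda>_. N))"
          by (rule borel_measurable_le) (auto intro: hm)
        show "{g \<in> space (PiM ({..<n}\<times>{..<n}) (\<lambda>_. N)). \<forall>i\<in>S. \<forall>j\<in>{..<n} - S. g (j, j) \<le> g (i, i)}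
            \<in> sets (PiM ({..<n}\<times>{..<n}) (\<lambda>_. N))"
          using fS by (intro sets.sets_Collect_finite_All borel_measurable_le cm) auto
      qed
      then show ?thesis using True by simp
    qed
  qed simp
qed




lemma lim_aux1:
  fixes e l c :: real assumes "e > 0" "l > 0" "c > 0"
  shows "(\<lambda>n::nat. ln (real n) * exp (e/2 * ln (real n)) * (l * ln (real n) / (c * real n)) powr e) \<longlonglongrightarrow> 0"
  using assms by real_asymp

lemma lim_aux2:
  fixes l :: real assumes "l > 0"
  shows "(\<lambda>n::nat. exp (1 - l/4 * ln (real n))) \<longlonglongrightarrow> 0"
  using assms by real_asymp

lemma ev_aux:
  fixes l :: real assumes "l > 0"
  shows "\<forall>\<^sub>F n in sequentially. l * ln (real n) / real n < 1"
    "\<forall>\<^sub>F n in sequentially. 0 < l * ln (real n) / real n"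
    "\<forall>\<^sub>F n in sequentially. l/4 * ln (real n) + 1 \<le> real n"
    "\<forall>\<^sub>F n in sequentially. 2 \<le> l/4 * ln (real n)"
  using assms by real_asymp+

theorem corollary1:
  fixes m \<Omega> N0 \<beta> :: real
  assumes "m > 0" and "\<Omega> > 0" and "N0 \<ge> 0" and "\<beta> > 0"
  shows "\<exists>c > 0. \<exists>k :: nat \<Rightarrow> nat. (\<forall>n. k n \<le> n) \<and>
    (\<lambda>n. measure (channel_space m \<Omega> n)
        {g \<in> space (channel_space m \<Omega> n).
           \<forall>S. top_direct_set n g (k n) S \<longrightarrow> real (throughput n g N0 \<beta> S) \<ge> c * ln (real n)})
    \<longlonglongrightarrow> 1"
proof -
  note m = assms(1) and Om = assms(2) and N0 = assms(3) and \<beta> = assms(4)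
  define N where "N = nakagami_power m \<Omega>"
  have PN: "prob_space N" unfolding N_def by (rule prob_N[OF m Om])
  have SN: "sets N = sets borel" unfolding N_def by (rule sets_N[OF m Om])
  define s where "s = m / (2 * \<Omega>)"
  define Mr where "Mr = (2::real) powr m"
  define a where "a = ta m \<Omega>"
  define t0 where "t0 = tc m \<Omega>"
  define e where "e = s / (a * \<beta>)"
  define l where "l = e / (2 * Mr)"
  define c where "c = l / 4"
  have s0: "s > 0" using m Om by (simp add: s_def)
  have Mr0: "Mr > 0" by (simp add: Mr_def)
  have a0: "a > 0" unfolding a_def by (rule ta_pos[OF m Om])
  have t00: "t0 > 0" unfolding t0_def by (rule tc_pos[OF m Om])
  have e0: "e > 0" using s0 a0 \<beta> by (simp add: e_def)
  have l0: "l > 0" using e0 Mr0 by (simp add: l_def)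
  have c0: "c > 0" using l0 by (simp add: c_def)
  have mg: "(\<integral>\<^sup>+v. ennreal (exp (s * v)) \<partial>N) = ennreal Mr"
  proof -
    have lt: "s < m / \<Omega>" using m Om by (simp add: s_def field_simps)
    have h: "(m/\<Omega> - s) * (\<Omega>/m) = 1/2" using m Om by (simp add: s_def field_simps)
    have "1 / (1/2::real) powr m = 2 powr m" by (simp add: powr_divide)
    moreover have "(\<integral>\<^sup>+v. ennreal (exp (s * v)) \<partial>N) = ennreal (1 / (1/2::real) powr m)"
      using mgf[OF m Om lt] unfolding h N_def .
    ultimately show ?thesis by (simp add: Mr_def)
  qed
  define k where "k n = min n (nat \<lceil>c * ln (real n)\<rceil>)" for n :: nat
  define p where "p n = l * ln (real n) / real n" for n :: nat
  define T where "T n = (SOME T. T \<ge> 0 \<and> measure N {T<..} = p n)" for n :: nat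
  define R where "R n = T n / \<beta> - N0" for n :: nat
  define E where "E n = {g \<in> space (channel_space m \<Omega> n).
           \<forall>S. top_direct_set n g (k n) S \<longrightarrow> real (throughput n g N0 \<beta> S) \<ge> c * ln (real n)}" for n
  define U2 where "U2 n = exp (1 - l/4 * ln (real n))" for n :: nat
  define U3 where "U3 n = exp (s * N0) * l * (ln (real n) * exp (e/2 * ln (real n)) * (l * ln (real n) / (t0 * real n)) powr e)" for n :: nat
  have kle: "\<forall>n. k n \<le> n" by (simp add: k_def)
  have CS: "channel_space m \<Omega> n = PiM ({..<n}\<times>{..<n}) (\<lambda>_. N)" for n
    by (simp add: channel_space_def N_def)
  have PC: "prob_space (channel_space m \<Omega> n)" for n
    unfolding CS by (intro prob_space_PiM PN)
  have ev: "\<forall>\<^sub>F n in sequentially. p n < 1 \<and> 0 < p n \<and> c * ln (real n) + 1 \<le> real n \<and> 2 \<le> c * ln (real n)"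
  proof -
    have "\<forall>\<^sub>F n in sequentially. (l * ln (real n) / real n < 1 \<and> 0 < l * ln (real n) / real n) \<and>
       (l/4 * ln (real n) + 1 \<le> real n \<and> 2 \<le> l/4 * ln (real n))"
      using ev_aux[OF l0] by (intro eventually_conj)
    then show ?thesis unfolding p_def c_def by (rule eventually_mono) auto
  qed
  have key: "1 - (U2 n + U3 n) \<le> measure (channel_space m \<Omega> n) (E n)"
    if H: "p n < 1 \<and> 0 < p n \<and> c * ln (real n) + 1 \<le> real n \<and> 2 \<le> c * ln (real n)" for n
  proof -
    have p1: "p n < 1" "0 < p n" and cn: "c * ln (real n) + 1 \<le> real n" and c2: "2 \<le> c * ln (real n)"
      using H by auto
    have n0: "n > 0" using p1 by (cases n) (auto simp: p_def)
    have ln0: "ln (real n) \<ge> 0" using n0 by simp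
    have cl0: "c * ln (real n) \<ge> 0" using c0 ln0 by simp
    have ceil: "real (nat \<lceil>c * ln (real n)\<rceil>) = real_of_int \<lceil>c * ln (real n)\<rceil>"
      using cl0 by simp
    have kn: "k n = nat \<lceil>c * ln (real n)\<rceil>"
    proof -
      have "real_of_int \<lceil>c * ln (real n)\<rceil> \<le> real n" using cn by linarith
      then have "nat \<lceil>c * ln (real n)\<rceil> \<le> n" using ceil by linarith
      then show ?thesis by (simp add: k_def)
    qed
    have kge: "real (k n) \<ge> c * ln (real n)" using kn ceil by simp
    have kle1: "real (k n) \<le> c * ln (real n) + 1" using kn ceil by linarith
    have k2: "k n \<ge> 2" using kge c2 by linarith
    have Tn: "T n \<ge> 0 \<and> measure N {T n<..} = p n"
      unfolding T_def N_def by (rule someI_ex) (use tail_choose[OF m Om p1(2) p1(1)] in auto)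
    have Emeas: "E n \<in> sets (PiM ({..<n}\<times>{..<n}) (\<lambda>_. N))"
      unfolding E_def CS by (rule event_meas[OF PN SN])
    have np: "emeasure N {..0} = 0" unfolding N_def by (rule nonpos_N[OF m Om])
    have mb: "measure (PiM ({..<n}\<times>{..<n}) (\<lambda>_. N)) (E n) \<ge> 1 -
      (exp (real (k n)) * (1 + measure N {T n<..} * (exp (-1) - 1)) ^ n
       + real n * (exp (- s * R n) * (measure N {T n<..} * (1 + measure N {T n<..} * (Mr - 1)) ^ (n - 1))))"
    proof (rule main_bound[OF PN SN np mg _ _ Emeas])
      show "0 \<le> Mr" "0 \<le> s" using Mr0 s0 by auto
      fix g assume g: "g \<in> space (PiM ({..<n}\<times>{..<n}) (\<lambda>_. N))"
        and G1: "\<forall>a<n. \<forall>b<n. g(a,b) > 0"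
        and G2: "k n \<le> card {i\<in>{..<n}. g(i,i) > T n}"
        and G3: "\<forall>i<n. g(i,i) > T n \<longrightarrow> (\<Sum>j\<in>{..<n}-{i}. if g(j,j) > T n then g(j,i) else 0) \<le> R n"
      show "g \<in> E n" unfolding E_def CS
      proof (intro CollectI conjI allI impI g)
        fix S assume top: "top_direct_set n g (k n) S"
        have "k n \<le> throughput n g N0 \<beta> S"
          by (rule det[OF G1 _ _ N0 \<beta> G2 G3[unfolded R_def] top]) (use k2 in auto)
        then show "c * ln (real n) \<le> real (throughput n g N0 \<beta> S)" using kge by linarith
      qed
    qed
    define q where "q = 1 + p n * (exp (-1) - 1)"
    define q3 where "q3 = 1 + p n * (Mr - 1)"
    have e1: "exp (-1::real) \<le> 1/2"
    proof -
      have "2 \<le> exp (1::real)" using exp_ge_add_one_self[of 1] by simp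
      then show ?thesis by (simp add: exp_minus field_simps)
    qed
    have q0: "q \<ge> 0"
    proof -
      have "p n * (exp (-1) - 1) \<ge> p n * (-1)" using p1 by (intro mult_left_mono) auto
      then show ?thesis using p1 by (simp add: q_def)
    qed
    have q30: "q3 \<ge> 0"
    proof -
      have "p n * (Mr - 1) \<ge> p n * (-1)" using p1 Mr0 by (intro mult_left_mono) auto
      then show ?thesis using p1 by (simp add: q3_def)
    qed
    have np: "real n * p n = l * ln (real n)" using n0 by (simp add: p_def)
    have B2: "exp (real (k n)) * q ^ n \<le> U2 n"
    proof -
      have "q ^ n \<le> exp (p n * (exp (-1) - 1)) ^ n"
        using q0 by (intro power_mono) (auto simp: q_def exp_ge_add_one_self[simplified add.commute])
      also have "\<dots> = exp (real n * (p n * (exp (-1) - 1)))" by (simp add: exp_of_nat_mult)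
      also have "real n * (p n * (exp (-1) - 1)) = l * ln (real n) * (exp (-1) - 1)"
        using np by (simp add: algebra_simps)
      finally have "exp (real (k n)) * q ^ n \<le> exp (real (k n)) * exp (l * ln (real n) * (exp (-1) - 1))"
        by (intro mult_left_mono) auto
      also have "\<dots> = exp (real (k n) + l * ln (real n) * (exp (-1) - 1))" by (simp add: exp_add)
      also have "\<dots> \<le> U2 n"
      proof -
        have "l * ln (real n) * (exp (-1) - 1) \<le> l * ln (real n) * (-1/2)"
          using e1 l0 ln0 by (intro mult_left_mono) auto
        then have "real (k n) + l * ln (real n) * (exp (-1) - 1) \<le> 1 - l/4 * ln (real n)"
          using kle1 by (simp add: c_def)
        then show ?thesis by (simp add: U2_def)
      qed
      finally show ?thesis .
    qed
    have B3: "real n * (exp (- s * R n) * (p n * q3 ^ (n - 1))) \<le> U3 n"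
    proof -
      have "q3 ^ (n-1) \<le> exp (p n * (Mr - 1)) ^ (n-1)"
        using q30 by (intro power_mono) (auto simp: q3_def exp_ge_add_one_self[simplified add.commute])
      also have "\<dots> = exp (real (n-1) * (p n * (Mr - 1)))" by (simp add: exp_of_nat_mult)
      also have "\<dots> \<le> exp (real n * (p n * Mr))"
      proof -
        have "real (n-1) * (p n * (Mr - 1)) \<le> real (n-1) * (p n * Mr)"
          using p1 by (intro mult_left_mono) (auto simp: algebra_simps)
        also have "\<dots> \<le> real n * (p n * Mr)"
          using p1 Mr0 by (intro mult_right_mono) auto
        finally show ?thesis by simp
      qed
      also have "real n * (p n * Mr) = e/2 * ln (real n)"
        using np Mr0 by (simp add: l_def field_simps)
      finally have q3b: "q3 ^ (n-1) \<le> exp (e/2 * ln (real n))" .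
      have tl: "t0 * exp (- a * T n) \<le> p n"
        using tail_N[OF m Om, of "T n"] Tn by (simp add: t0_def a_def N_def)
      have eT: "exp (- s * T n / \<beta>) = exp (- a * T n) powr e"
        using a0 \<beta> by (simp add: powr_def e_def field_simps)
      also have "\<dots> \<le> (p n / t0) powr e"
        using tl t00 e0 by (intro powr_mono2) (auto simp: field_simps)
      finally have eTb: "exp (- s * T n / \<beta>) \<le> (p n / t0) powr e" .
      have R: "exp (- s * R n) = exp (s * N0) * exp (- s * T n / \<beta>)"
        by (simp add: R_def exp_add[symmetric] algebra_simps)
      have "real n * (exp (- s * R n) * (p n * q3 ^ (n - 1)))
          = exp (s * N0) * (real n * p n) * exp (- s * T n / \<beta>) * q3 ^ (n - 1)"
        unfolding R by (simp add: algebra_simps)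
      also have "\<dots> \<le> exp (s * N0) * (real n * p n) * (p n / t0) powr e * exp (e/2 * ln (real n))"
        using p1 n0 q30 eTb q3b by (intro mult_mono mult_left_mono) auto
      also have "\<dots> = U3 n"
        using np n0 by (simp add: U3_def p_def algebra_simps)
      finally show ?thesis .
    qed
    have "1 - (U2 n + U3 n) \<le> 1 - (exp (real (k n)) * q ^ n + real n * (exp (- s * R n) * (p n * q3 ^ (n - 1))))"
      using B2 B3 by linarith
    also have "\<dots> \<le> measure (PiM ({..<n}\<times>{..<n}) (\<lambda>_. N)) (E n)"
      using mb Tn by (simp add: q_def q3_def)
    finally show ?thesis by (simp add: CS)
  qed
  have lim: "(\<lambda>n. 1 - (U2 n + U3 n)) \<longlonglongrightarrow> 1"
  proof -
    have "U2 \<longlonglongrightarrow> 0" unfolding U2_def by (rule lim_aux2[OF l0])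
    moreover have "U3 \<longlonglongrightarrow> 0"
      unfolding U3_def using tendsto_mult_left[OF lim_aux1[OF e0 l0 t00], of "exp (s * N0) * l"] by simp
    ultimately have "(\<lambda>n. U2 n + U3 n) \<longlonglongrightarrow> 0" using tendsto_add by fastforce
    then show ?thesis using tendsto_diff[OF tendsto_const[of 1]] by fastforce
  qed
  have "(\<lambda>n. measure (channel_space m \<Omega> n) (E n)) \<longlonglongrightarrow> 1"
  proof (rule tendsto_sandwich[OF _ _ lim tendsto_const])
    show "\<forall>\<^sub>F n in sequentially. 1 - (U2 n + U3 n) \<le> measure (channel_space m \<Omega> n) (E n)"
      using ev by (rule eventually_mono) (rule key)
    show "\<forall>\<^sub>F n in sequentially. measure (channel_space m \<Omega> n) (E n) \<le> 1"
      using prob_space.prob_le_1[OF PC] by simp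
  qed
  then show ?thesis using c0 kle unfolding E_def by blast
qed


end
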